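(* Let $\mathbb{R}^n$ carry a norm $\|\cdot\|$, $Q\subseteq\mathbb{R}^n$ closed convex, $f:Q\to\mathbb{R}$ convex, continuous, differentiable with $\|\nabla f(x)-\nabla f(y)\|_*\le L\|x-y\|$ on $Q$, $h$ convex on $Q$, and let $F=f+h$ attain its minimum over $Q$ at $x_*$. Let $d$ be a prox-function with Bregman divergence $V$, $x_0\in Q$, $V(x_*,x_0)\le R^2$. Suppose only a $(\delta,L)$-oracle for $f$ is available and run the mirror triangle method with inexact $(\delta,L)$-oracle (see context) with starting point $x_0$, $N\ge1$ steps, the value $\delta$, and $0<L_0\le L$. Then $$F(x_N)-F(x_* )\le\frac{8LR^2}{(N+1)^2}+2N\delta.$$
   Context: $\|\lambda\|_*=\max_{\|\nu\|\le1}\langle\lambda,\nu\rangle$. Prox-function: continuously differentiable $d:Q\to\mathbb{R}$, $1$-strongly convex w.r.t. $\|\cdot\|$; $V(x,y)=d(x)-d(y)-\langle\nabla d(y),x-y\rangle$. A $(\delta,L)$-oracle returns for each query point $y\in Q$ a pair $(f_\delta(y),\nabla f_\delta(y))\in\mathbb{R}\times\mathbb{R}^n$ with $0\le f(x)-f_\delta(y)-\langle\nabla f_\delta(y),x-y\rangle\le\frac L2\|x-y\|^2+\delta$ for all $x\in Q$. Method: $y_0=u_0=x_0$, $L_1=L_0/2$, $\alpha_0=A_0=0$. Step $k+1$ ($k=0,\dots,N-1$) with current $L_{k+1}$: (i) $\alpha_{k+1}$ is the largest root of $A_k+\alpha=L_{k+1}\alpha^2$, $A_{k+1}=A_k+\alpha_{k+1}$;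 (ii) $y_{k+1}=(\alpha_{k+1}u_k+A_kx_k)/A_{k+1}$; (iii) $u_{k+1}=\arg\min_{x\in Q}\{V(x,u_k)+\alpha_{k+1}(f_\delta(y_{k+1})+\langle\nabla f_\delta(y_{k+1}),x-y_{k+1}\rangle+h(x))\}$; (iv) $x_{k+1}=(\alpha_{k+1}u_{k+1}+A_kx_k)/A_{k+1}$; (v) if $f_\delta(x_{k+1})\le f_\delta(y_{k+1})+\langle\nabla f_\delta(y_{k+1}),x_{k+1}-y_{k+1}\rangle+\frac{L_{k+1}}2\|x_{k+1}-y_{k+1}\|^2+\delta$, set $L_{k+2}=L_{k+1}/2$ and go to the next step; otherwise replace $L_{k+1}$ by $2L_{k+1}$ and repeat step $k+1$ from (i). *)

theory Defs
  imports "HOL-Analysis.Analysis"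
begin

definition is_norm :: "('a::real_vector \<Rightarrow> real) \<Rightarrow> bool" where
  "is_norm nrm \<longleftrightarrow> (\<forall>x. nrm x = 0 \<longleftrightarrow> x = 0) \<and> (\<forall>c x. nrm (c *\<^sub>R x) = \<bar>c\<bar> * nrm x)
     \<and> (\<forall>x y. nrm (x + y) \<le> nrm x + nrm y)"

definition dual_norm :: "('a::real_inner \<Rightarrow> real) \<Rightarrow> 'a \<Rightarrow> real" where
  "dual_norm nrm l = (SUP v\<in>{v. nrm v \<le> 1}. inner l v)"

definition strongly_convex_wrt :: "('a::real_vector \<Rightarrow> real) \<Rightarrow> 'a set \<Rightarrow> ('a \<Rightarrow> real) \<Rightarrow> bool" where
  "strongly_convex_wrt nrm Q d \<longleftrightarrow> (\<forall>x\<in>Q. \<forall>y\<in>Q. \<forall>t::real. 0 \<le> t \<and> t \<le> 1 \<longrightarrow>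
      d (t *\<^sub>R x + (1 - t) *\<^sub>R y) \<le> t * d x + (1 - t) * d y - t * (1 - t) / 2 * (nrm (x - y))\<^sup>2)"

definition prox_function :: "('a::real_inner \<Rightarrow> real) \<Rightarrow> 'a set \<Rightarrow> ('a \<Rightarrow> real) \<Rightarrow> ('a \<Rightarrow> 'a) \<Rightarrow> bool" where
  "prox_function nrm Q d gd \<longleftrightarrow>
     (\<forall>y\<in>Q. (d has_derivative (\<lambda>v. inner (gd y) v)) (at y within Q))
     \<and> continuous_on Q gd \<and> strongly_convex_wrt nrm Q d"

definition bregman :: "('a::real_inner \<Rightarrow> real) \<Rightarrow> ('a \<Rightarrow> 'a) \<Rightarrow> 'a \<Rightarrow> 'a \<Rightarrow> real" where
  "bregman d gd x y = d x - d y - inner (gd y) (x - y)"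

definition dL_oracle :: "('a::real_inner \<Rightarrow> real) \<Rightarrow> 'a set \<Rightarrow> ('a \<Rightarrow> real) \<Rightarrow> real \<Rightarrow> real
    \<Rightarrow> ('a \<Rightarrow> real) \<Rightarrow> ('a \<Rightarrow> 'a) \<Rightarrow> bool" where
  "dL_oracle nrm Q f \<delta> L fd gfd \<longleftrightarrow> (\<forall>y\<in>Q. \<forall>x\<in>Q.
      0 \<le> f x - fd y - inner (gfd y) (x - y) \<and>
      f x - fd y - inner (gfd y) (x - y) \<le> L / 2 * (nrm (x - y))\<^sup>2 + \<delta>)"

text \<open>One trial of step k+1 (items (i)-(iv)) with trial constant Lt, from state (Ak, xk, uk),
  producing alpha, A', y, u', x'.  V = Bregman divergence.\<close>
definition mtm_trial :: "'a set \<Rightarrow> ('a::real_inner \<Rightarrow> 'a \<Rightarrow> real) \<Rightarrow> ('a \<Rightarrow> real) \<Rightarrow> ('a \<Rightarrow> 'a)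
    \<Rightarrow> ('a \<Rightarrow> real) \<Rightarrow> real \<Rightarrow> 'a \<Rightarrow> 'a \<Rightarrow> real
    \<Rightarrow> real \<Rightarrow> real \<Rightarrow> 'a \<Rightarrow> 'a \<Rightarrow> 'a \<Rightarrow> bool" where
  "mtm_trial Q V fd gfd h Ak xk uk Lt \<alpha> A' y u' x' \<longleftrightarrow>
     (Ak + \<alpha> = Lt * \<alpha>\<^sup>2 \<and> (\<forall>\<beta>. Ak + \<beta> = Lt * \<beta>\<^sup>2 \<longrightarrow> \<beta> \<le> \<alpha>))
     \<and> A' = Ak + \<alpha>
     \<and> y = (1 / A') *\<^sub>R (\<alpha> *\<^sub>R uk + Ak *\<^sub>R xk)
     \<and> u' \<in> Q
     \<and> (\<forall>z\<in>Q. V u' uk + \<alpha> * (fd y + inner (gfd y) (u' - y) + h u')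
               \<le> V z uk + \<alpha> * (fd y + inner (gfd y) (z - y) + h z))
     \<and> x' = (1 / A') *\<^sub>R (\<alpha> *\<^sub>R u' + Ak *\<^sub>R xk)"

definition mtm_accept :: "('a::real_inner \<Rightarrow> real) \<Rightarrow> ('a \<Rightarrow> real) \<Rightarrow> ('a \<Rightarrow> 'a) \<Rightarrow> real \<Rightarrow> real
    \<Rightarrow> 'a \<Rightarrow> 'a \<Rightarrow> bool" where
  "mtm_accept nrm fd gfd \<delta> Lt y x' \<longleftrightarrow>
     fd x' \<le> fd y + inner (gfd y) (x' - y) + Lt / 2 * (nrm (x' - y))\<^sup>2 + \<delta>"

end

theory Submission imports Defs begin

lemma dir_deriv:
  fixes d :: "'a::real_inner \<Rightarrow> real"
  assumes der: "\<forall>y\<in>Q. (d has_derivative (\<lambda>v. inner (gd y) v)) (at y within Q)"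
    and Q: "convex Q" and y: "y \<in> Q" and x: "x \<in> Q"
  shows "((\<lambda>t. (d (y + t *\<^sub>R (x - y)) - d y) / t) \<longlongrightarrow> inner (gd y) (x - y)) (at_right 0)"
proof -
  have p: "((\<lambda>t. y + t *\<^sub>R (x - y)) has_derivative (\<lambda>t. t *\<^sub>R (x - y))) (at 0 within {0..1})"
    by (auto intro!: derivative_eq_intros)
  have img: "(\<lambda>t. y + t *\<^sub>R (x - y)) ` {0..1} \<subseteq> Q"
  proof
    fix w assume "w \<in> (\<lambda>t. y + t *\<^sub>R (x - y)) ` {0..(1::real)}"
    then obtain t where t: "0 \<le> t" "t \<le> 1" "w = y + t *\<^sub>R (x - y)" by auto
    have "w = (1 - t) *\<^sub>R y + t *\<^sub>R x" using t by (simp add: algebra_simps)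
    then show "w \<in> Q" using Q x y t by (simp add: convexD)
  qed
  have "((\<lambda>t. d (y + t *\<^sub>R (x - y))) has_derivative
      (\<lambda>t. inner (gd (y + 0 *\<^sub>R (x - y))) (t *\<^sub>R (x - y)))) (at 0 within {0..1})"
    by (rule has_derivative_in_compose2[OF _ img _ p]) (use der in auto)
  then have D: "((\<lambda>t. d (y + t *\<^sub>R (x - y))) has_derivative (\<lambda>t. t * inner (gd y) (x - y))) (at 0 within {0..1})"
    by simp
  then have "((\<lambda>t. d (y + t *\<^sub>R (x - y))) has_field_derivative inner (gd y) (x - y)) (at 0 within {0..1})"
  proof -
    have e: "(\<lambda>t. t * inner (gd y) (x - y)) = (*) (inner (gd y) (x - y))" by (auto simp: fun_eq_iff)
    show ?thesis unfolding has_field_derivative_def using D e by metis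
  qed
  then have "((\<lambda>t. (d (y + t *\<^sub>R (x - y)) - d y) / t) \<longlongrightarrow> inner (gd y) (x - y)) (at 0 within {0..1})"
    by (simp add: has_field_derivative_iff)
  then show ?thesis by (simp add: at_within_Icc_at_right)
qed

lemma limit_le:
  fixes g :: "real \<Rightarrow> real"
  assumes "(g \<longlongrightarrow> a) (at_right 0)" "(k \<longlongrightarrow> b) (at_right 0)"
    and "\<And>t. 0 < t \<Longrightarrow> t < 1 \<Longrightarrow> g t \<le> k t"
  shows "a \<le> b"
proof (rule tendsto_le[OF _ assms(2) assms(1)])
  show "at_right (0::real) \<noteq> bot" by simp
  show "\<forall>\<^sub>F t in at_right 0. g t \<le> k t"
  proof -
    have "(0::real) < 1" by simp
    then show ?thesis unfolding eventually_at_right[of 0 "1::real", OF \<open>0 < 1\<close>] using assms(3) by (intro exI[of _ 1]) auto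
  qed
qed

lemma bregman_ge:
  fixes d :: "'a::real_inner \<Rightarrow> real"
  assumes prox: "prox_function nrm Q d gd" and Q: "convex Q" and y: "y \<in> Q" and x: "x \<in> Q"
  shows "(nrm (x - y))\<^sup>2 / 2 \<le> bregman d gd x y"
proof -
  have der: "\<forall>y\<in>Q. (d has_derivative (\<lambda>v. inner (gd y) v)) (at y within Q)"
    and sc: "strongly_convex_wrt nrm Q d" using prox by (auto simp: prox_function_def)
  let ?n = "(nrm (x - y))\<^sup>2"
  have lim2: "((\<lambda>t::real. d x - d y - (1 - t) / 2 * ?n) \<longlongrightarrow> d x - d y - (1 - 0) / 2 * ?n) (at_right 0)"
    by (intro tendsto_intros) auto
  have "inner (gd y) (x - y) \<le> d x - d y - (1 - 0) / 2 * ?n"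
  proof (rule limit_le[OF dir_deriv[OF der Q y x] lim2])
    fix t :: real assume t: "0 < t" "t < 1"
    have e: "y + t *\<^sub>R (x - y) = t *\<^sub>R x + (1 - t) *\<^sub>R y" by (simp add: algebra_simps)
    have "d (y + t *\<^sub>R (x - y)) \<le> t * d x + (1 - t) * d y - t * (1 - t) / 2 * ?n"
      using sc x y t unfolding strongly_convex_wrt_def e by auto
    then have "d (y + t *\<^sub>R (x - y)) - d y \<le> t * (d x - d y - (1 - t) / 2 * ?n)"
      by (simp add: algebra_simps)
    then show "(d (y + t *\<^sub>R (x - y)) - d y) / t \<le> d x - d y - (1 - t) / 2 * ?n"
      using t by (simp add: divide_le_eq mult.commute)
  qed
  then show ?thesis by (simp add: bregman_def)
qed

lemma three_point:
  fixes d :: "'a::real_inner \<Rightarrow> real"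
  assumes prox: "prox_function nrm Q d gd" and Q: "convex Q"
    and psi: "\<And>a b t. a \<in> Q \<Longrightarrow> b \<in> Q \<Longrightarrow> 0 \<le> t \<Longrightarrow> t \<le> 1 \<Longrightarrow>
        \<psi> ((1 - t) *\<^sub>R a + t *\<^sub>R b) \<le> (1 - t) * \<psi> a + t * \<psi> b"
    and uk: "uk \<in> Q" and u: "u \<in> Q" and z: "z \<in> Q"
    and min: "\<forall>w\<in>Q. bregman d gd u uk + \<psi> u \<le> bregman d gd w uk + \<psi> w"
  shows "bregman d gd u uk + \<psi> u + bregman d gd z u \<le> bregman d gd z uk + \<psi> z"
proof -
  have der: "\<forall>y\<in>Q. (d has_derivative (\<lambda>v. inner (gd y) v)) (at y within Q)"
    using prox by (auto simp: prox_function_def)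
  let ?c = "inner (gd uk) (z - u) - (\<psi> z - \<psi> u)"
  have "?c \<le> inner (gd u) (z - u)"
  proof (rule limit_le[OF tendsto_const dir_deriv[OF der Q u z]])
    fix t :: real assume t: "0 < t" "t < 1"
    have e: "u + t *\<^sub>R (z - u) = (1 - t) *\<^sub>R u + t *\<^sub>R z" by (simp add: algebra_simps)
    have wQ: "(1 - t) *\<^sub>R u + t *\<^sub>R z \<in> Q" using Q u z t by (simp add: convexD)
    have m: "bregman d gd u uk + \<psi> u \<le> bregman d gd (u + t *\<^sub>R (z - u)) uk + \<psi> (u + t *\<^sub>R (z - u))"
      using min wQ e by auto
    have p: "\<psi> (u + t *\<^sub>R (z - u)) \<le> (1 - t) * \<psi> u + t * \<psi> z"
      using psi[OF u z] t e by auto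
    have "bregman d gd (u + t *\<^sub>R (z - u)) uk - bregman d gd u uk
        = d (u + t *\<^sub>R (z - u)) - d u - t * inner (gd uk) (z - u)"
      by (simp add: bregman_def inner_diff_right inner_add_right algebra_simps)
    with m p have "t * ?c \<le> d (u + t *\<^sub>R (z - u)) - d u"
      by (simp add: algebra_simps)
    then show "?c \<le> (d (u + t *\<^sub>R (z - u)) - d u) / t"
      using t by (simp add: le_divide_eq mult.commute)
  qed
  moreover have "bregman d gd z uk - bregman d gd u uk - bregman d gd z u = inner (gd u) (z - u) - inner (gd uk) (z - u)"
    by (simp add: bregman_def inner_diff_right algebra_simps)
  ultimately show ?thesis by linarith
qed

lemma trial_basic:
  assumes tr: "mtm_trial Q V fd gfd h Ak xk uk Lt \<alpha> A' y u' x'"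
    and Lt: "0 < Lt" and Ak: "0 \<le> Ak" and xk: "xk \<in> Q" and uk: "uk \<in> Q" and Q: "convex Q"
  shows "0 < \<alpha>" "A' = Ak + \<alpha>" "Lt * \<alpha>\<^sup>2 = A'" "u' \<in> Q"
    "y = (1 - \<alpha> / A') *\<^sub>R xk + (\<alpha> / A') *\<^sub>R uk"
    "x' = (1 - \<alpha> / A') *\<^sub>R xk + (\<alpha> / A') *\<^sub>R u'"
    "x' - y = (\<alpha> / A') *\<^sub>R (u' - uk)"
    "y \<in> Q" "x' \<in> Q"
    "\<forall>z\<in>Q. V u' uk + \<alpha> * (fd y + inner (gfd y) (u' - y) + h u')
               \<le> V z uk + \<alpha> * (fd y + inner (gfd y) (z - y) + h z)"
proof -
  have eq: "Ak + \<alpha> = Lt * \<alpha>\<^sup>2" and mx: "\<forall>\<beta>. Ak + \<beta> = Lt * \<beta>\<^sup>2 \<longrightarrow> \<beta> \<le> \<alpha>"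
    and A': "A' = Ak + \<alpha>" and y: "y = (1 / A') *\<^sub>R (\<alpha> *\<^sub>R uk + Ak *\<^sub>R xk)"
    and u': "u' \<in> Q" and x': "x' = (1 / A') *\<^sub>R (\<alpha> *\<^sub>R u' + Ak *\<^sub>R xk)"
    and mn: "\<forall>z\<in>Q. V u' uk + \<alpha> * (fd y + inner (gfd y) (u' - y) + h u')
               \<le> V z uk + \<alpha> * (fd y + inner (gfd y) (z - y) + h z)"
    using tr unfolding mtm_trial_def by blast+
  define s where "s = sqrt (1 + 4 * Lt * Ak)"
  have s0: "0 \<le> s" and s2: "s\<^sup>2 = 1 + 4 * Lt * Ak" using Lt Ak by (auto simp: s_def)
  define \<beta> where "\<beta> = (1 + s) / (2 * Lt)"
  have "Lt * \<beta>\<^sup>2 = Ak + \<beta>"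
    using Lt s2 unfolding \<beta>_def by (simp add: field_simps power2_eq_square)
  then have "\<beta> \<le> \<alpha>" using mx by auto
  moreover have "0 < \<beta>" using Lt s0 unfolding \<beta>_def by auto
  ultimately show ap: "0 < \<alpha>" by simp
  show "A' = Ak + \<alpha>" "Lt * \<alpha>\<^sup>2 = A'" "u' \<in> Q" using A' eq u' by auto
  have Ap: "0 < A'" using A' ap Ak by simp
  have t1: "1 - \<alpha> / A' = Ak / A'" using Ap A' by (simp add: field_simps)
  show ye: "y = (1 - \<alpha> / A') *\<^sub>R xk + (\<alpha> / A') *\<^sub>R uk"
    unfolding t1 y using Ap by (simp add: scaleR_add_right divide_inverse_commute)
  show xe: "x' = (1 - \<alpha> / A') *\<^sub>R xk + (\<alpha> / A') *\<^sub>R u'"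
    unfolding t1 x' using Ap by (simp add: scaleR_add_right divide_inverse_commute)
  show "x' - y = (\<alpha> / A') *\<^sub>R (u' - uk)" unfolding xe ye by (simp add: algebra_simps)
  have t0: "0 \<le> \<alpha> / A'" "\<alpha> / A' \<le> 1" using Ap ap A' Ak by auto
  show "y \<in> Q" unfolding ye by (rule convexD_alt[OF Q xk uk t0])
  show "x' \<in> Q" unfolding xe by (rule convexD_alt[OF Q xk u' t0])
  show "\<forall>z\<in>Q. V u' uk + \<alpha> * (fd y + inner (gfd y) (u' - y) + h u')
               \<le> V z uk + \<alpha> * (fd y + inner (gfd y) (z - y) + h z)" by (rule mn)
qed

lemma growth_step:
  fixes M Lt a \<alpha> k :: real
  assumes M: "0 < M" and Lt: "0 < Lt" "Lt \<le> M" and ap: "0 < \<alpha>" and eq: "Lt * \<alpha>\<^sup>2 = a + \<alpha>"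
    and k: "0 \<le> k" and a: "(k + 1)\<^sup>2 / (4 * M) \<le> a"
  shows "(k + 2)\<^sup>2 / (4 * M) \<le> a + \<alpha>"
proof -
  have al: "(k + 2) / (2 * M) \<le> \<alpha>"
  proof (rule ccontr)
    assume "\<not> ?thesis"
    then have lt: "\<alpha> < (k + 2) / (2 * M)" by simp
    have "M * \<alpha>\<^sup>2 \<ge> a + \<alpha>" using eq Lt ap by (metis mult_right_mono zero_le_power2)
    moreover have "M * \<alpha>\<^sup>2 < \<alpha> * (k + 2) / 2"
    proof -
      have "M * \<alpha> < (k + 2) / 2" using lt M by (simp add: field_simps)
      then have "M * \<alpha> * \<alpha> < (k + 2) / 2 * \<alpha>" using ap by (simp add: mult_strict_right_mono)
      then show ?thesis by (simp add: power2_eq_square algebra_simps)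
    qed
    ultimately have "a < \<alpha> * k / 2" by (simp add: algebra_simps)
    moreover have "\<alpha> * k / 2 \<le> (k + 2) / (2 * M) * k / 2"
    proof -
      have "\<alpha> * k \<le> (k + 2) / (2 * M) * k" using lt k by (intro mult_right_mono) auto
      then show ?thesis by (simp add: mult.commute)
    qed
    moreover have "(k + 2) / (2 * M) * k / 2 \<le> (k + 1)\<^sup>2 / (4 * M)"
      using M by (simp add: field_simps power2_eq_square)
    ultimately show False using a by linarith
  qed
  have "(k + 2)\<^sup>2 \<le> (k + 1)\<^sup>2 + 2 * (k + 2)" by (simp add: power2_eq_square algebra_simps)
  then have "(k + 2)\<^sup>2 / (4 * M) \<le> ((k + 1)\<^sup>2 + 2 * (k + 2)) / (4 * M)"
    using M by (intro divide_right_mono) auto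
  also have "\<dots> = (k + 1)\<^sup>2 / (4 * M) + (k + 2) / (2 * M)"
    using M by (simp add: field_simps)
  finally show ?thesis using al a by linarith
qed

lemma norm_basic:
  assumes "is_norm nrm"
  shows "nrm 0 = 0" "\<And>c v. nrm (c *\<^sub>R v) = \<bar>c\<bar> * nrm v"
  using assms unfolding is_norm_def by auto

lemma accept_large:
  assumes orcl: "dL_oracle nrm Q f \<delta> L fd gfd" and y: "y \<in> Q" and x': "x' \<in> Q"
    and nrm: "is_norm nrm" and LL: "L \<le> Lt"
  shows "mtm_accept nrm fd gfd \<delta> Lt y x'"
proof -
  have "0 \<le> f x' - fd x' - inner (gfd x') (x' - x')" using orcl x' unfolding dL_oracle_def by blast
  then have a: "fd x' \<le> f x'" by simp
  have b: "f x' - fd y - inner (gfd y) (x' - y) \<le> L / 2 * (nrm (x' - y))\<^sup>2 + \<delta>"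
    using orcl x' y unfolding dL_oracle_def by blast
  have "L / 2 * (nrm (x' - y))\<^sup>2 \<le> Lt / 2 * (nrm (x' - y))\<^sup>2"
    using LL by (intro mult_right_mono) auto
  then show ?thesis unfolding mtm_accept_def using a b by linarith
qed

lemma step_ineq:
  fixes d :: "'a::real_inner \<Rightarrow> real"
  assumes tr: "mtm_trial Q (bregman d gd) fd gfd h Ak xk uk Lt \<alpha> A' y u' x'"
    and Lt: "0 < Lt" and Ak: "0 \<le> Ak" and xk: "xk \<in> Q" and uk: "uk \<in> Q" and Q: "convex Q"
    and acc: "mtm_accept nrm fd gfd \<delta> Lt y x'"
    and nrm: "is_norm nrm" and orcl: "dL_oracle nrm Q f \<delta> L fd gfd"
    and hc: "convex_on Q h" and prox: "prox_function nrm Q d gd" and xs: "xs \<in> Q"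
  shows "A' * (f x' + h x') \<le> Ak * (f xk + h xk) + \<alpha> * (f xs + h xs)
     + bregman d gd xs uk - bregman d gd xs u' + 2 * \<delta> * A'"
proof -
  note T = trial_basic[OF tr Lt Ak xk uk Q]
  let ?V = "bregman d gd"
  define g where "g = gfd y"
  define l where "l z = fd y + inner g (z - y)" for z
  define t where "t = \<alpha> / A'"
  have ap: "0 < \<alpha>" and A': "A' = Ak + \<alpha>" and LA: "Lt * \<alpha>\<^sup>2 = A'" and u': "u' \<in> Q"
    and xe: "x' = (1 - t) *\<^sub>R xk + t *\<^sub>R u'" and xy: "x' - y = t *\<^sub>R (u' - uk)"
    and yQ: "y \<in> Q" and x'Q: "x' \<in> Q"
    and mn: "\<forall>z\<in>Q. ?V u' uk + \<alpha> * (l u' + h u') \<le> ?V z uk + \<alpha> * (l z + h z)"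
    using T unfolding t_def l_def g_def by auto
  have Ap: "0 < A'" using A' ap Ak by simp
  have t0: "0 \<le> t" "t \<le> 1" using Ap ap A' Ak unfolding t_def by auto
  have At: "A' * t = \<alpha>" "A' * (1 - t) = Ak" using Ap A' unfolding t_def by (auto simp: field_simps)
  note NB = norm_basic[OF nrm]
  have "0 \<le> f x' - fd x' - inner (gfd x') (x' - x') \<and> f x' - fd x' - inner (gfd x') (x' - x') \<le> L / 2 * (nrm (x' - x'))\<^sup>2 + \<delta>"
    using orcl x'Q unfolding dL_oracle_def by blast
  then have s1: "f x' \<le> fd x' + \<delta>" using NB by simp
  have s2: "fd x' \<le> l x' + Lt / 2 * (nrm (x' - y))\<^sup>2 + \<delta>"
    using acc unfolding mtm_accept_def l_def g_def by simp
  let ?n = "(nrm (u' - uk))\<^sup>2"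
  have "nrm (x' - y) = t * nrm (u' - uk)" using xy NB t0 by simp
  then have "A' * (Lt / 2 * (nrm (x' - y))\<^sup>2) = (Lt * (A' * t) * t) / 2 * ?n"
    by (simp add: power2_eq_square algebra_simps)
  also have "\<dots> = ?n / 2 * (Lt * \<alpha>\<^sup>2) / A'" using At Ap unfolding t_def by (simp add: power2_eq_square field_simps)
  also have "\<dots> = ?n / 2" using LA Ap by simp
  finally have s3: "A' * (Lt / 2 * (nrm (x' - y))\<^sup>2) = ?n / 2" .
  have s4: "h x' \<le> (1 - t) * h xk + t * h u'" unfolding xe by (rule convex_onD[OF hc t0 xk u'])
  have s5: "l x' = (1 - t) * l xk + t * l u'"
  proof -
    have e: "x' - y = (1 - t) *\<^sub>R (xk - y) + t *\<^sub>R (u' - y)" unfolding xe by (simp add: algebra_simps)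
    have "l x' = fd y + inner g ((1 - t) *\<^sub>R (xk - y) + t *\<^sub>R (u' - y))" unfolding l_def e by simp
    then show ?thesis unfolding l_def by (simp add: inner_add_right algebra_simps)
  qed
  have s6: "l xk \<le> f xk" "l xs \<le> f xs"
    using orcl xk xs yQ unfolding dL_oracle_def l_def g_def by fastforce+
  define \<psi> where "\<psi> w = \<alpha> * (l w + h w)" for w
  have psi: "\<psi> ((1 - s) *\<^sub>R a + s *\<^sub>R b) \<le> (1 - s) * \<psi> a + s * \<psi> b"
    if "a \<in> Q" "b \<in> Q" "0 \<le> s" "s \<le> 1" for a b s
  proof -
    have "h ((1 - s) *\<^sub>R a + s *\<^sub>R b) \<le> (1 - s) * h a + s * h b" by (rule convex_onD[OF hc that(3,4,1,2)])
    moreover have "l ((1 - s) *\<^sub>R a + s *\<^sub>R b) = (1 - s) * l a + s * l b"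
    proof -
      have "(1 - s) *\<^sub>R a + s *\<^sub>R b - y = (1 - s) *\<^sub>R (a - y) + s *\<^sub>R (b - y)" by (simp add: algebra_simps)
      then show ?thesis unfolding l_def by (simp add: inner_add_right algebra_simps)
    qed
    ultimately have "\<psi> ((1 - s) *\<^sub>R a + s *\<^sub>R b) \<le> \<alpha> * ((1 - s) * l a + s * l b + ((1 - s) * h a + s * h b))"
      unfolding \<psi>_def using ap by (intro mult_left_mono) auto
    also have "\<dots> = (1 - s) * \<psi> a + s * \<psi> b" unfolding \<psi>_def by (simp add: algebra_simps)
    finally show ?thesis .
  qed
  have s7: "?V u' uk + \<psi> u' + ?V xs u' \<le> ?V xs uk + \<psi> xs"
    by (rule three_point[OF prox Q psi uk u' xs]) (use mn in \<open>auto simp: \<psi>_def\<close>)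
  have s8: "?n / 2 \<le> ?V u' uk" by (rule bregman_ge[OF prox Q uk u'])
  have "A' * (f x' + h x') \<le> A' * (l x' + Lt / 2 * (nrm (x' - y))\<^sup>2 + 2 * \<delta> + h x')"
    using s1 s2 Ap by simp
  also have "\<dots> = A' * l x' + ?n / 2 + 2 * \<delta> * A' + A' * h x'"
    using s3 by (simp add: algebra_simps)
  also have "\<dots> \<le> A' * ((1 - t) * l xk + t * l u') + ?n / 2 + 2 * \<delta> * A' + A' * ((1 - t) * h xk + t * h u')"
    using s4 s5 Ap by simp
  also have "\<dots> = Ak * (l xk + h xk) + \<psi> u' + ?n / 2 + 2 * \<delta> * A'"
  proof -
    have e: "A' * ((1 - t) * a + t * b) = (A' * (1 - t)) * a + (A' * t) * b" for a b
      by (simp add: algebra_simps)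
    show ?thesis unfolding \<psi>_def e At by (simp add: algebra_simps)
  qed
  also have "\<dots> \<le> Ak * (l xk + h xk) + ?V xs uk + \<psi> xs - ?V xs u' + 2 * \<delta> * A'"
    using s7 s8 by simp
  also have "\<dots> \<le> Ak * (f xk + h xk) + \<alpha> * (f xs + h xs) + ?V xs uk - ?V xs u' + 2 * \<delta> * A'"
  proof -
    have "Ak * (l xk + h xk) \<le> Ak * (f xk + h xk)" using s6 Ak by (intro mult_left_mono) auto
    moreover have "\<psi> xs \<le> \<alpha> * (f xs + h xs)" unfolding \<psi>_def using s6 ap by (intro mult_left_mono) auto
    ultimately show ?thesis by simp
  qed
  finally show ?thesis .
qed

theorem theorem3:
  fixes nrm :: "real^'n \<Rightarrow> real"
    and Q :: "(real^'n) set"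
    and f h d :: "real^'n \<Rightarrow> real"
    and gf gd :: "real^'n \<Rightarrow> real^'n"
    and fd :: "real^'n \<Rightarrow> real" and gfd :: "real^'n \<Rightarrow> real^'n"
    and L L0 R \<delta> :: real
    and xs x0 :: "real^'n"
    and N :: nat
    and J :: "nat \<Rightarrow> nat" and Lc :: "nat \<Rightarrow> real"
    and A :: "nat \<Rightarrow> real" and x u :: "nat \<Rightarrow> real^'n"
    and t\<alpha> tA :: "nat \<Rightarrow> nat \<Rightarrow> real" and ty tu tx :: "nat \<Rightarrow> nat \<Rightarrow> real^'n"
  assumes norm: "is_norm nrm"
    and Q: "closed Q" "convex Q"
    and f_convex: "convex_on Q f" and f_cont: "continuous_on Q f"
    and f_grad: "\<forall>y\<in>Q. (f has_derivative (\<lambda>v. inner (gf y) v)) (at y within Q)"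
    and f_lip: "\<forall>x\<in>Q. \<forall>y\<in>Q. dual_norm nrm (gf x - gf y) \<le> L * nrm (x - y)"
    and h_convex: "convex_on Q h"
    and xs_min: "xs \<in> Q" "\<forall>z\<in>Q. f xs + h xs \<le> f z + h z"
    and prox: "prox_function nrm Q d gd"
    and x0: "x0 \<in> Q" and R: "bregman d gd xs x0 \<le> R\<^sup>2"
    and orcl: "dL_oracle nrm Q f \<delta> L fd gfd"
    and N: "N \<ge> 1"
    and L0: "0 < L0" "L0 \<le> L"
    and init: "x 0 = x0" "u 0 = x0" "A 0 = 0" "Lc 0 = L0 / 2"
    and Lc_next: "\<forall>k<N. Lc (Suc k) = Lc k * 2 ^ J k / 2"
    and trials: "\<forall>k<N. \<forall>i\<le>J k. mtm_trial Q (bregman d gd) fd gfd h (A k) (x k) (u k)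
                     (Lc k * 2 ^ i) (t\<alpha> k i) (tA k i) (ty k i) (tu k i) (tx k i)"
    and rejected: "\<forall>k<N. \<forall>i<J k. \<not> mtm_accept nrm fd gfd \<delta> (Lc k * 2 ^ i) (ty k i) (tx k i)"
    and accepted: "\<forall>k<N. mtm_accept nrm fd gfd \<delta> (Lc k * 2 ^ J k) (ty k (J k)) (tx k (J k))"
    and next_state: "\<forall>k<N. A (Suc k) = tA k (J k) \<and> u (Suc k) = tu k (J k) \<and> x (Suc k) = tx k (J k)"
  shows "(f (x N) + h (x N)) - (f xs + h xs) \<le> 8 * L * R\<^sup>2 / (real N + 1)\<^sup>2 + 2 * real N * \<delta>"
proof -
  let ?V = "bregman d gd"
  define F where "F z = f z + h z" for z
  define Lp where "Lp k = Lc k * 2 ^ J k" for k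
  have convQ: "convex Q" using Q by simp
  note NB = norm_basic[OF norm]
  have "0 \<le> f x0 - fd x0 - inner (gfd x0) (x0 - x0) \<and> f x0 - fd x0 - inner (gfd x0) (x0 - x0) \<le> L / 2 * (nrm (x0 - x0))\<^sup>2 + \<delta>"
    using orcl x0 unfolding dL_oracle_def by blast
  then have delta: "0 \<le> \<delta>" using NB by simp
  have Lpos: "0 < L" using L0 by simp
  have trk: "mtm_trial Q ?V fd gfd h (A k) (x k) (u k) (Lc k * 2^i) (t\<alpha> k i) (tA k i) (ty k i) (tu k i) (tx k i)"
    if "k < N" "i \<le> J k" for k i using trials that by blast
  have Lp2: "Lp k \<le> 2 * L" if k: "k < N" and I: "x k \<in> Q" "u k \<in> Q" "0 \<le> A k" "0 < Lc k" "Lc k \<le> L" for k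
  proof (cases "J k")
    case 0 then show ?thesis using I Lpos by (simp add: Lp_def)
  next
    case (Suc j)
    have "Lc k * 2^j < L"
    proof (rule ccontr)
      assume "\<not> ?thesis"
      then have LL: "L \<le> Lc k * 2^j" by simp
      have pos: "0 < Lc k * 2^j" using I by simp
      have jJ: "j \<le> J k" using Suc by simp
      note T = trial_basic[OF trk[OF k jJ] pos I(3) I(1) I(2) convQ]
      have "mtm_accept nrm fd gfd \<delta> (Lc k * 2^j) (ty k j) (tx k j)"
        by (rule accept_large[OF orcl T(8) T(9) norm LL])
      moreover have "j < J k" using Suc by simp
      ultimately show False using rejected k by blast
    qed
    then show ?thesis using Suc by (simp add: Lp_def)
  qed
  have inv: "k \<le> N \<longrightarrow> x k \<in> Q \<and> u k \<in> Q \<and> 0 \<le> A k \<and> 0 < Lc k \<and> Lc k \<le> L" for k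
  proof (induction k)
    case 0 show ?case using init x0 L0 by auto
  next
    case (Suc k) show ?case
    proof
      assume kN: "Suc k \<le> N"
      then have k: "k < N" by simp
      with Suc.IH have I: "x k \<in> Q" "u k \<in> Q" "0 \<le> A k" "0 < Lc k" "Lc k \<le> L" by auto
      have pos: "0 < Lc k * 2^J k" using I by simp
      note T = trial_basic[OF trk[OF k order_refl] pos I(3) I(1) I(2) convQ]
      have ns: "A (Suc k) = tA k (J k)" "u (Suc k) = tu k (J k)" "x (Suc k) = tx k (J k)"
        using next_state k by auto
      have LS: "Lc (Suc k) = Lp k / 2" using Lc_next k by (simp add: Lp_def)
      have "0 < Lc (Suc k)" "Lc (Suc k) \<le> L" using LS Lp2[OF k I] pos unfolding Lp_def by auto
      moreover have "x (Suc k) \<in> Q" "u (Suc k) \<in> Q" using ns(2,3) T(4,9) by auto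
      moreover have "0 \<le> A (Suc k)" using ns(1) T(1,2) I(3) by simp
      ultimately show "x (Suc k) \<in> Q \<and> u (Suc k) \<in> Q \<and> 0 \<le> A (Suc k) \<and> 0 < Lc (Suc k) \<and> Lc (Suc k) \<le> L"
        by blast
    qed
  qed
  have stepk: "A (Suc k) * F (x (Suc k)) \<le> A k * F (x k) + (A (Suc k) - A k) * F xs + ?V xs (u k) - ?V xs (u (Suc k)) + 2 * \<delta> * A (Suc k)
      \<and> A k < A (Suc k) \<and> Lp k * (A (Suc k) - A k)\<^sup>2 = A (Suc k) \<and> 0 < Lp k \<and> Lp k \<le> 2 * L"
    if k: "k < N" for k
  proof -
    have I: "x k \<in> Q" "u k \<in> Q" "0 \<le> A k" "0 < Lc k" "Lc k \<le> L" using inv[of k] k by auto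
    have pos: "0 < Lc k * 2^J k" using I by simp
    note T = trial_basic[OF trk[OF k order_refl] pos I(3) I(1) I(2) convQ]
    have ns: "A (Suc k) = tA k (J k)" "u (Suc k) = tu k (J k)" "x (Suc k) = tx k (J k)"
      using next_state k by auto
    have acc: "mtm_accept nrm fd gfd \<delta> (Lc k * 2 ^ J k) (ty k (J k)) (tx k (J k))" using accepted k by blast
    note S = step_ineq[OF trk[OF k order_refl] pos I(3) I(1) I(2) convQ acc norm orcl h_convex prox xs_min(1)]
    show ?thesis using S T ns Lp2[OF k I] pos unfolding F_def Lp_def by auto
  qed
  have tele: "m \<le> N \<longrightarrow> A m * (F (x m) - F xs) \<le> ?V xs x0 - ?V xs (u m) + 2 * \<delta> * real m * A m" for m
  proof (induction m)
    case 0 show ?case using init by simp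
  next
    case (Suc m) show ?case
    proof
      assume mN: "Suc m \<le> N"
      then have IH: "A m * (F (x m) - F xs) \<le> ?V xs x0 - ?V xs (u m) + 2 * \<delta> * real m * A m"
        using Suc.IH by simp
      have S: "A (Suc m) * F (x (Suc m)) \<le> A m * F (x m) + (A (Suc m) - A m) * F xs + ?V xs (u m) - ?V xs (u (Suc m)) + 2 * \<delta> * A (Suc m)"
        "A m < A (Suc m)" using stepk[of m] mN by auto
      have "\<delta> * real m * A m \<le> \<delta> * real m * A (Suc m)" using S(2) delta by (intro mult_left_mono) auto
      then show "A (Suc m) * (F (x (Suc m)) - F xs) \<le> ?V xs x0 - ?V xs (u (Suc m)) + 2 * \<delta> * real (Suc m) * A (Suc m)"
        using IH S(1) by (simp add: algebra_simps)
    qed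
  qed
  have growth: "(real k + 1)\<^sup>2 / (4 * (2 * L)) \<le> A k" if "1 \<le> k" "k \<le> N" for k
    using that
  proof (induction k)
    case 0 then show ?case by simp
  next
    case (Suc k)
    have k: "k < N" using Suc by simp
    have S: "A k < A (Suc k)" "Lp k * (A (Suc k) - A k)\<^sup>2 = A (Suc k)" "0 < Lp k" "Lp k \<le> 2 * L"
      using stepk[OF k] by auto
    show ?case
    proof (cases "k = 0")
      case True
      then have A1: "Lp 0 * (A 1)\<^sup>2 = A 1" "0 < A 1" using S init by auto
      then have "Lp 0 * A 1 = 1" by (simp add: power2_eq_square)
      then have "A 1 = 1 / Lp 0" using S True by (simp add: field_simps)
      also have "\<dots> \<ge> 1 / (2 * L)" using S True by (intro divide_left_mono) auto
      finally show ?thesis using True Lpos by (simp add: field_simps)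
    next
      case False
      then have IH: "(real k + 1)\<^sup>2 / (4 * (2 * L)) \<le> A k" using Suc by simp
      have "(real k + 2)\<^sup>2 / (4 * (2 * L)) \<le> A k + (A (Suc k) - A k)"
        by (rule growth_step) (use Lpos S IH in \<open>auto simp: algebra_simps\<close>)
      then show ?thesis by (simp add: add.commute)
    qed
  qed
  have AN: "(real N + 1)\<^sup>2 / (8 * L) \<le> A N" using growth[of N] N by simp
  have ANp: "0 < A N" using AN Lpos by (smt (verit) divide_pos_pos zero_less_power2 of_nat_less_0_iff)
  have uN: "u N \<in> Q" using inv[of N] by simp
  have "0 \<le> ?V xs (u N)"
    using bregman_ge[OF prox convQ uN xs_min(1)] by (smt (verit) zero_le_power2 divide_nonneg_nonneg)
  then have "A N * (F (x N) - F xs) \<le> R\<^sup>2 + 2 * \<delta> * real N * A N"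
    using tele[of N] R init by simp
  then have "F (x N) - F xs \<le> (R\<^sup>2 + 2 * \<delta> * real N * A N) / A N"
    using ANp by (simp add: field_simps)
  also have "\<dots> = R\<^sup>2 / A N + 2 * real N * \<delta>" using ANp by (simp add: field_simps)
  also have "R\<^sup>2 / A N \<le> R\<^sup>2 / ((real N + 1)\<^sup>2 / (8 * L))"
    using AN ANp Lpos by (intro divide_left_mono) auto
  also have "\<dots> = 8 * L * R\<^sup>2 / (real N + 1)\<^sup>2" by simp
  finally show ?thesis unfolding F_def by simp
qed

end
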